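(* Let $\mathcal M=(a_{i,j})_{i,j\in[n]}$ be a real matrix with $0\le a_{i,j}\le 1$ for all $i,j\in[n]$ such that each row sum $s_i=\sum_{j\in[n]}a_{i,j}$ and each column sum $t_j=\sum_{i\in[n]}a_{i,j}$ is a (nonnegative) integer. Let $X=\sum_{i\in[n]}s_i$. Then there exists a matrix $\mathcal N=(b_{i,j})_{i,j\in[n]}$ with $b_{i,j}\in\{0,1\}$ for all $i,j$, $\sum_{j\in[n]}b_{i,j}=s_i$ for all $i\in[n]$, $\sum_{i\in[n]}b_{i,j}=t_j$ for all $j\in[n]$, and $$\sum_{i\in[n]}\sum_{j\in[n]}a_{i,j}\,b_{i,j}\ \ge\ \frac{X^2}{n^2}.$$
   Context: $[n]=\{1,\dots,n\}$ for a positive integer $n$. *)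

theory Defs
  imports Complex_Main
begin

end

theory Submission
  imports Defs
begin


lemma homog:
  fixes c :: "'e \<Rightarrow> 'v \<Rightarrow> real"
  assumes "finite E" "finite V" "card E < card V"
  shows "\<exists>x. (\<forall>v. v \<notin> V \<longrightarrow> x v = 0) \<and> (\<exists>v\<in>V. x v \<noteq> 0) \<and> (\<forall>e\<in>E. (\<Sum>v\<in>V. c e v * x v) = 0)"
  using assms
proof (induction E arbitrary: V c rule: finite_induct)
  case empty
  then obtain v where v: "v \<in> V" by fastforce
  show ?case
    by (rule exI[of _ "\<lambda>u. if u = v then 1 else 0"]) (use v in auto)
next
  case (insert e E)
  show ?case
  proof (cases "\<forall>v\<in>V. c e v = 0")
    case True
    have "card E < card V" using insert by simp
    from insert.IH[OF insert.prems(1) this, of c] obtain x where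
      x: "\<forall>v. v \<notin> V \<longrightarrow> x v = 0" "\<exists>v\<in>V. x v \<noteq> 0" "\<forall>g\<in>E. (\<Sum>v\<in>V. c g v * x v) = 0"
      by blast
    show ?thesis using x True by (intro exI[of _ x]) auto
  next
    case False
    then obtain v0 where v0: "v0 \<in> V" "c e v0 \<noteq> 0" by auto
    define c' where "c' g u = c g u - c g v0 / c e v0 * c e u" for g u
    have fV': "finite (V - {v0})" using insert by simp
    have "card E < card (V - {v0})" using insert v0 by simp
    from insert.IH[OF fV' this, of c'] obtain y where
      y: "\<forall>v. v \<notin> V - {v0} \<longrightarrow> y v = 0" "\<exists>v\<in>V - {v0}. y v \<noteq> 0"
         "\<forall>g\<in>E. (\<Sum>u\<in>V - {v0}. c' g u * y u) = 0"
      by blast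
    define Se where "Se = (\<Sum>u\<in>V-{v0}. c e u * y u)"
    define x where "x = y(v0 := - Se / c e v0)"
    have sx: "(\<Sum>u\<in>V. c g u * x u) = c g v0 * x v0 + (\<Sum>u\<in>V-{v0}. c g u * y u)" for g
    proof -
      have "(\<Sum>u\<in>V. c g u * x u) = c g v0 * x v0 + (\<Sum>u\<in>V-{v0}. c g u * x u)"
        using sum.remove[OF insert.prems(1) v0(1)] by blast
      also have "(\<Sum>u\<in>V-{v0}. c g u * x u) = (\<Sum>u\<in>V-{v0}. c g u * y u)"
        by (rule sum.cong) (auto simp: x_def)
      finally show ?thesis .
    qed
    have "\<forall>g\<in>insert e E. (\<Sum>u\<in>V. c g u * x u) = 0"
    proof
      fix g assume g: "g \<in> insert e E"
      show "(\<Sum>u\<in>V. c g u * x u) = 0"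
      proof (cases "g = e")
        case True
        then show ?thesis using sx[of e] v0 by (simp add: x_def Se_def)
      next
        case False
        then have gE: "g \<in> E" using g by auto
        have "(\<Sum>u\<in>V - {v0}. c' g u * y u) = (\<Sum>u\<in>V-{v0}. c g u * y u) - c g v0 / c e v0 * Se"
          by (simp add: c'_def Se_def algebra_simps sum_subtractf sum_distrib_left)
        with y(3) gE have "(\<Sum>u\<in>V-{v0}. c g u * y u) = c g v0 / c e v0 * Se" by auto
        then show ?thesis using sx[of g] v0 by (simp add: x_def)
      qed
    qed
    moreover have "\<forall>v. v \<notin> V \<longrightarrow> x v = 0" using y(1) v0 by (auto simp: x_def)
    moreover have "\<exists>v\<in>V. x v \<noteq> 0" using y(2) by (auto simp: x_def)
    ultimately show ?thesis by blast
  qed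
qed



lemma rowsum_conv:
  fixes x :: "nat \<times> nat \<Rightarrow> real"
  assumes S: "S \<subseteq> N \<times> N" "finite N" and x0: "\<forall>p. p \<notin> S \<longrightarrow> x p = 0" and i: "i \<in> N"
  shows "(\<Sum>p\<in>S. (if fst p = i then 1 else 0) * x p) = (\<Sum>j\<in>N. x (i,j))"
proof -
  have "(\<Sum>p\<in>S. (if fst p = i then 1 else 0) * x p) = (\<Sum>p\<in>N\<times>N. (if fst p = i then 1 else 0) * x p)"
    by (rule sum.mono_neutral_left) (use S x0 in auto)
  also have "\<dots> = (\<Sum>i'\<in>N. \<Sum>j\<in>N. (if i' = i then 1 else 0) * x (i',j))"
    by (simp add: sum.cartesian_product case_prod_beta)
  also have "\<dots> = (\<Sum>j\<in>N. x (i,j))"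
    using i S(2) by (simp add: sum.swap[of _ N N] if_distrib[where f="\<lambda>z. z * _"] sum.delta cong: if_cong)
  finally show ?thesis .
qed

lemma colsum_conv:
  fixes x :: "nat \<times> nat \<Rightarrow> real"
  assumes S: "S \<subseteq> N \<times> N" "finite N" and x0: "\<forall>p. p \<notin> S \<longrightarrow> x p = 0" and j: "j \<in> N"
  shows "(\<Sum>p\<in>S. (if snd p = j then 1 else 0) * x p) = (\<Sum>i\<in>N. x (i,j))"
proof -
  have "(\<Sum>p\<in>S. (if snd p = j then 1 else 0) * x p) = (\<Sum>p\<in>N\<times>N. (if snd p = j then 1 else 0) * x p)"
    by (rule sum.mono_neutral_left) (use S x0 in auto)
  also have "\<dots> = (\<Sum>i\<in>N. \<Sum>j'\<in>N. (if j' = j then 1 else 0) * x (i,j'))"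
    by (simp add: sum.cartesian_product case_prod_beta)
  also have "\<dots> = (\<Sum>i\<in>N. x (i,j))"
    using j S(2) by (simp add: if_distrib[where f="\<lambda>z. z * _"] sum.delta' cong: if_cong)
  finally show ?thesis .
qed



lemma card_fibers_ge2:
  fixes S :: "('a \<times> 'b) set" and g :: "'a \<times> 'b \<Rightarrow> 'c"
  assumes fin: "finite S" and two: "\<And>p. p \<in> S \<Longrightarrow> \<exists>q\<in>S. q \<noteq> p \<and> g q = g p"
  shows "2 * card (g ` S) \<le> card S"
proof -
  have e: "card S = (\<Sum>y\<in>g ` S. card {x. x \<in> S \<and> g x = y})"
    using sum.group[OF fin finite_imageI[OF fin], where g=g and h="\<lambda>_. 1::nat"] by simp
  have "(\<Sum>y\<in>g ` S. card {x. x \<in> S \<and> g x = y}) \<ge> (\<Sum>y\<in>g ` S. 2)"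
  proof (rule sum_mono)
    fix y assume "y \<in> g ` S"
    then obtain p where p: "p \<in> S" "g p = y" by blast
    obtain q where q: "q \<in> S" "q \<noteq> p" "g q = g p" using two[OF p(1)] by blast
    have sub: "{p, q} \<subseteq> {x. x \<in> S \<and> g x = y}" using p q by auto
    have "finite {x. x \<in> S \<and> g x = y}" using fin by simp
    then have "card {p,q} \<le> card {x. x \<in> S \<and> g x = y}" using sub card_mono by blast
    moreover have "card {p,q} = 2" using q(2) by simp
    ultimately show "2 \<le> card {x. x \<in> S \<and> g x = y}" by simp
  qed
  then show ?thesis using e by simp
qed

lemma cycle_dir:
  fixes S :: "(nat \<times> nat) set" and N :: "nat set"
  assumes finN: "finite N" and SN: "S \<subseteq> N \<times> N" and Sne: "S \<noteq> {}"
    and rowtwo: "\<And>i j. (i,j) \<in> S \<Longrightarrow> \<exists>j'. j' \<noteq> j \<and> (i,j') \<in> S"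
    and coltwo: "\<And>i j. (i,j) \<in> S \<Longrightarrow> \<exists>i'. i' \<noteq> i \<and> (i',j) \<in> S"
  shows "\<exists>D::nat\<Rightarrow>nat\<Rightarrow>real. (\<forall>i j. (i,j) \<notin> S \<longrightarrow> D i j = 0) \<and> (\<exists>p\<in>S. D (fst p) (snd p) \<noteq> 0)
     \<and> (\<forall>i\<in>N. (\<Sum>j\<in>N. D i j) = 0) \<and> (\<forall>j\<in>N. (\<Sum>i\<in>N. D i j) = 0)"
proof -
  have finS: "finite S" using finN SN finite_subset by blast
  define R where "R = fst ` S"
  define C where "C = snd ` S"
  obtain r0 where r0: "r0 \<in> R" using Sne R_def by auto
  have r0N: "r0 \<in> N" using r0 SN R_def by auto
  have finR: "finite R" "finite C" using finS R_def C_def by auto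
  have cR: "2 * card R \<le> card S" unfolding R_def
  proof (rule card_fibers_ge2[OF finS])
    fix p assume p: "p \<in> S"
    obtain i j where ij: "p = (i,j)" by (cases p)
    obtain j' where "j' \<noteq> j" "(i,j') \<in> S" using rowtwo[of i j] p ij by blast
    then show "\<exists>q\<in>S. q \<noteq> p \<and> fst q = fst p" using ij by (intro bexI[of _ "(i,j')"]) auto
  qed
  have cC: "2 * card C \<le> card S" unfolding C_def
  proof (rule card_fibers_ge2[OF finS])
    fix p assume p: "p \<in> S"
    obtain i j where ij: "p = (i,j)" by (cases p)
    obtain i' where "i' \<noteq> i" "(i',j) \<in> S" using coltwo[of i j] p ij by blast
    then show "\<exists>q\<in>S. q \<noteq> p \<and> snd q = snd p" using ij by (intro bexI[of _ "(i',j)"]) auto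
  qed
  define E where "E = Inl ` (R - {r0}) \<union> Inr ` C"
  have finE: "finite E" using finR E_def by auto
  have "card E = card (R - {r0}) + card C"
    unfolding E_def by (subst card_Un_disjoint) (auto simp: finR card_image)
  also have "\<dots> = card R - 1 + card C" using r0 finR by simp
  moreover have "card R > 0" using r0 finR card_gt_0_iff by blast
  ultimately have "card E < card S" using cR cC by linarith
  define c where "c e p = ((case e of Inl r \<Rightarrow> (if fst p = r then 1 else 0) | Inr k \<Rightarrow> (if snd p = k then 1 else 0)) :: real)"
    for e :: "nat + nat" and p :: "nat \<times> nat"
  obtain x :: "nat \<times> nat \<Rightarrow> real" where
    x: "\<forall>v. v \<notin> S \<longrightarrow> x v = 0" "\<exists>v\<in>S. x v \<noteq> 0" "\<forall>e\<in>E. (\<Sum>v\<in>S. c e v * x v) = 0"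
    using homog[OF finE finS \<open>card E < card S\<close>, of c] by blast
  define D where "D i j = x (i,j)" for i j
  have col: "(\<Sum>i\<in>N. D i j) = 0" if j: "j \<in> N" for j
  proof (cases "j \<in> C")
    case True
    then have "(\<Sum>v\<in>S. c (Inr j) v * x v) = 0" using x(3) E_def by auto
    then show ?thesis using colsum_conv[OF SN finN x(1) j] by (simp add: c_def D_def)
  next
    case False
    then have "\<And>i. (i,j) \<notin> S" using C_def by force
    then show ?thesis using x(1) by (simp add: D_def)
  qed
  have row: "(\<Sum>j\<in>N. D i j) = 0" if i: "i \<in> N" "i \<noteq> r0" for i
  proof (cases "i \<in> R")
    case True
    then have "(\<Sum>v\<in>S. c (Inl i) v * x v) = 0" using x(3) E_def i by auto
    then show ?thesis using rowsum_conv[OF SN finN x(1) i(1)] by (simp add: c_def D_def)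
  next
    case False
    then have "\<And>j. (i,j) \<notin> S" using R_def by force
    then show ?thesis using x(1) by (simp add: D_def)
  qed
  have "(\<Sum>i\<in>N. \<Sum>j\<in>N. D i j) = (\<Sum>j\<in>N. \<Sum>i\<in>N. D i j)" by (rule sum.swap)
  also have "\<dots> = 0" using col by simp
  finally have tot: "(\<Sum>i\<in>N. \<Sum>j\<in>N. D i j) = 0" .
  have "(\<Sum>i\<in>N. \<Sum>j\<in>N. D i j) = (\<Sum>j\<in>N. D r0 j) + (\<Sum>i\<in>N-{r0}. \<Sum>j\<in>N. D i j)"
    using sum.remove[OF finN r0N] by blast
  also have "(\<Sum>i\<in>N-{r0}. \<Sum>j\<in>N. D i j) = 0" using row by simp
  finally have "(\<Sum>j\<in>N. D r0 j) = 0" using tot by simp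
  then have "\<forall>i\<in>N. (\<Sum>j\<in>N. D i j) = 0" using row by metis
  moreover have "\<forall>i j. (i,j) \<notin> S \<longrightarrow> D i j = 0" using x(1) D_def by simp
  moreover have "\<exists>p\<in>S. D (fst p) (snd p) \<noteq> 0" using x(2) D_def by simp
  ultimately show ?thesis using col by blast
qed



lemma frac_two:
  fixes f :: "nat \<Rightarrow> real"
  assumes finN: "finite N" and bnd: "\<forall>j\<in>N. 0 \<le> f j \<and> f j \<le> 1" and int: "sum f N \<in> \<int>"
    and j: "j \<in> N" "0 < f j" "f j < 1"
  shows "\<exists>j'. j' \<noteq> j \<and> j' \<in> N \<and> 0 < f j' \<and> f j' < 1"
proof (rule ccontr)
  assume "\<not> ?thesis"
  then have "\<forall>j'\<in>N - {j}. f j' = 0 \<or> f j' = 1" using bnd by force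
  then have "\<forall>j'\<in>N - {j}. f j' \<in> \<int>" by (metis Ints_0 Ints_1)
  then have "sum f (N - {j}) \<in> \<int>" by (intro Ints_sum) auto
  moreover have "sum f N = f j + sum f (N - {j})" using sum.remove[OF finN j(1)] by blast
  ultimately have "f j \<in> \<int>" using int by (metis Ints_diff add_diff_cancel_right')
  then obtain k :: int where "f j = of_int k" by (auto elim: Ints_cases)
  then show False using j by auto
qed

definition fracs :: "nat set \<Rightarrow> (nat \<Rightarrow> nat \<Rightarrow> real) \<Rightarrow> (nat \<times> nat) set" where
  "fracs N M = {p \<in> N \<times> N. 0 < M (fst p) (snd p) \<and> M (fst p) (snd p) < 1}"

lemma round_aux:
  fixes N :: "nat set" and w :: "nat \<Rightarrow> nat \<Rightarrow> real"
  assumes finN: "finite N"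
  shows "card (fracs N M) = k \<Longrightarrow> (\<forall>i\<in>N. \<forall>j\<in>N. 0 \<le> M i j \<and> M i j \<le> 1) \<Longrightarrow>
    (\<forall>i\<in>N. (\<Sum>j\<in>N. M i j) \<in> \<int>) \<Longrightarrow> (\<forall>j\<in>N. (\<Sum>i\<in>N. M i j) \<in> \<int>) \<Longrightarrow>
    \<exists>B. (\<forall>i\<in>N. \<forall>j\<in>N. B i j \<in> {0,1}) \<and> (\<forall>i\<in>N. (\<Sum>j\<in>N. B i j) = (\<Sum>j\<in>N. M i j))
      \<and> (\<forall>j\<in>N. (\<Sum>i\<in>N. B i j) = (\<Sum>i\<in>N. M i j))
      \<and> (\<Sum>i\<in>N. \<Sum>j\<in>N. w i j * B i j) \<ge> (\<Sum>i\<in>N. \<Sum>j\<in>N. w i j * M i j)"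
proof (induction k arbitrary: M rule: less_induct)
  case (less k M)
  note bnd = less.prems(2) and rint = less.prems(3) and cint = less.prems(4)
  define F where "F = fracs N M"
  have finF: "finite F" unfolding F_def fracs_def
    by (rule finite_subset[of _ "N \<times> N"]) (auto simp: finN)
  show ?case
  proof (cases "F = {}")
    case True
    have "\<forall>i\<in>N. \<forall>j\<in>N. M i j \<in> {0,1}"
    proof (intro ballI)
      fix i j assume ij: "i \<in> N" "j \<in> N"
      then have "(i,j) \<notin> F" using True by auto
      then show "M i j \<in> {0,1}" using bnd ij by (force simp: F_def fracs_def)
    qed
    then show ?thesis by (intro exI[of _ M]) auto
  next
    case False
    have SN: "F \<subseteq> N \<times> N" by (auto simp: F_def fracs_def)
    have rowtwo: "\<exists>j'. j' \<noteq> j \<and> (i,j') \<in> F" if "(i,j) \<in> F" for i j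
      using frac_two[OF finN, of "M i" j] that bnd rint by (auto simp: F_def fracs_def)
    have coltwo: "\<exists>i'. i' \<noteq> i \<and> (i',j) \<in> F" if "(i,j) \<in> F" for i j
      using frac_two[OF finN, of "\<lambda>i. M i j" i] that bnd cint by (auto simp: F_def fracs_def)
    have "\<exists>D::nat\<Rightarrow>nat\<Rightarrow>real. (\<forall>i j. (i,j) \<notin> F \<longrightarrow> D i j = 0) \<and> (\<exists>p\<in>F. D (fst p) (snd p) \<noteq> 0)
     \<and> (\<forall>i\<in>N. (\<Sum>j\<in>N. D i j) = 0) \<and> (\<forall>j\<in>N. (\<Sum>i\<in>N. D i j) = 0)"
      apply (rule cycle_dir[OF finN SN False])
      using rowtwo coltwo by auto
    then obtain D :: "nat\<Rightarrow>nat\<Rightarrow>real" where D: "\<forall>i j. (i,j) \<notin> F \<longrightarrow> D i j = 0" "\<exists>p\<in>F. D (fst p) (snd p) \<noteq> 0"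
      "\<forall>i\<in>N. (\<Sum>j\<in>N. D i j) = 0" "\<forall>j\<in>N. (\<Sum>i\<in>N. D i j) = 0"
      by blast
    define g where "g = (\<Sum>i\<in>N. \<Sum>j\<in>N. w i j * D i j)"
    define s :: real where "s = (if g \<ge> 0 then 1 else -1)"
    define D' where "D' i j = s * D i j" for i j
    have gD': "(\<Sum>i\<in>N. \<Sum>j\<in>N. w i j * D' i j) \<ge> 0"
    proof -
      have "(\<Sum>i\<in>N. \<Sum>j\<in>N. w i j * D' i j) = s * g"
        by (simp add: D'_def g_def sum_distrib_left algebra_simps)
      then show ?thesis by (simp add: s_def)
    qed
    have D'0: "\<forall>i j. (i,j) \<notin> F \<longrightarrow> D' i j = 0" using D(1) by (simp add: D'_def)
    have D'r: "\<forall>i\<in>N. (\<Sum>j\<in>N. D' i j) = 0" using D(3) by (simp add: D'_def sum_distrib_left[symmetric])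
    have D'c: "\<forall>j\<in>N. (\<Sum>i\<in>N. D' i j) = 0" using D(4) by (simp add: D'_def sum_distrib_left[symmetric])
    define T where "T = {p \<in> F. D' (fst p) (snd p) \<noteq> 0}"
    have finT: "finite T" using finF T_def by auto
    have Tne: "T \<noteq> {}"
    proof -
      obtain p where p: "p \<in> F" "D (fst p) (snd p) \<noteq> 0" using D(2) by blast
      then have "p \<in> T" by (simp add: T_def D'_def s_def)
      then show ?thesis by blast
    qed
    define lim where "lim = (\<lambda>(i,j). if D' i j > 0 then (1 - M i j) / D' i j else M i j / (- D' i j))"
    define t where "t = Min (lim ` T)"
    have limpos: "lim p > 0" if "p \<in> T" for p
      using that by (cases p) (auto simp: lim_def T_def F_def fracs_def divide_less_0_iff)
    have tpos: "t > 0" using finT Tne limpos by (simp add: t_def)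
    have tle: "t \<le> lim p" if "p \<in> T" for p using finT that by (simp add: t_def)
    have "t \<in> lim ` T" using Min_in[of "lim ` T"] finT Tne t_def by auto
    then obtain ps where ps: "ps \<in> T" "lim ps = t" by auto
    define M' where "M' i j = M i j + t * D' i j" for i j
    have bnd': "\<forall>i\<in>N. \<forall>j\<in>N. 0 \<le> M' i j \<and> M' i j \<le> 1"
    proof (intro ballI)
      fix i j assume ij: "i \<in> N" "j \<in> N"
      show "0 \<le> M' i j \<and> M' i j \<le> 1"
      proof (cases "(i,j) \<in> T")
        case False
        then have "D' i j = 0" using D'0 T_def by auto
        then show ?thesis using bnd ij by (simp add: M'_def)
      next
        case True
        have tl: "t \<le> lim (i,j)" using tle[OF True] .
        have m: "0 \<le> M i j" "M i j \<le> 1" using bnd ij by auto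
        show ?thesis
        proof (cases "D' i j > 0")
          case True
          then have "t * D' i j \<le> 1 - M i j" using tl by (simp add: lim_def pos_le_divide_eq)
          moreover have "0 \<le> t * D' i j" using True tpos by simp
          ultimately show ?thesis using m by (simp add: M'_def)
        next
          case False
          then have neg: "D' i j < 0" using \<open>(i,j) \<in> T\<close> T_def by auto
          have tl2: "t \<le> M i j / (- D' i j)" using tl False by (simp add: lim_def)
          have "t * (- D' i j) \<le> (M i j / (- D' i j)) * (- D' i j)"
            by (rule mult_right_mono[OF tl2]) (use neg in simp)
          also have "\<dots> = M i j" using neg by simp
          finally have "t * (- D' i j) \<le> M i j" .
          moreover have "t * D' i j \<le> 0" using neg tpos by (simp add: mult_pos_neg less_imp_le)
          ultimately show ?thesis using m by (simp add: M'_def)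
        qed
      qed
    qed
    have ps01: "M' (fst ps) (snd ps) = 0 \<or> M' (fst ps) (snd ps) = 1"
    proof -
      obtain i j where ij: "ps = (i,j)" by (cases ps)
      have nz: "D' i j \<noteq> 0" using ps ij T_def by auto
      show ?thesis
      proof (cases "D' i j > 0")
        case True
        have "t = (1 - M i j) / D' i j" using ps ij True by (simp add: lim_def)
        then have "t * D' i j = 1 - M i j" using True by simp
        then show ?thesis using ij by (simp add: M'_def)
      next
        case False
        have "t = M i j / (- D' i j)" using ps ij False by (simp add: lim_def)
        then have "t * D' i j = - M i j" using nz by simp
        then show ?thesis using ij by (simp add: M'_def)
      qed
    qed
    have sub: "fracs N M' \<subseteq> F - {ps}"
    proof
      fix p assume p: "p \<in> fracs N M'"
      obtain i j where ij: "p = (i,j)" by (cases p)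
      have "p \<noteq> ps" using p ps01 by (auto simp: fracs_def)
      moreover have "p \<in> F"
      proof (cases "D' i j = 0")
        case True
        then show ?thesis using p ij by (simp add: fracs_def F_def M'_def)
      next
        case False
        then show ?thesis using D'0 ij by auto
      qed
      ultimately show "p \<in> F - {ps}" by auto
    qed
    have "ps \<in> F" using ps T_def by auto
    then have "F - {ps} \<subset> F" by auto
    then have "fracs N M' \<subset> F" using sub by blast
    then have lessk: "card (fracs N M') < k" using psubset_card_mono[OF finF] less.prems(1) F_def by auto
    have rs: "\<forall>i\<in>N. (\<Sum>j\<in>N. M' i j) = (\<Sum>j\<in>N. M i j)"
      using D'r by (simp add: M'_def sum.distrib sum_distrib_left[symmetric])
    have cs: "\<forall>j\<in>N. (\<Sum>i\<in>N. M' i j) = (\<Sum>i\<in>N. M i j)"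
      using D'c by (simp add: M'_def sum.distrib sum_distrib_left[symmetric])
    have obj: "(\<Sum>i\<in>N. \<Sum>j\<in>N. w i j * M' i j) \<ge> (\<Sum>i\<in>N. \<Sum>j\<in>N. w i j * M i j)"
    proof -
      have "(\<Sum>i\<in>N. \<Sum>j\<in>N. w i j * M' i j) = (\<Sum>i\<in>N. \<Sum>j\<in>N. w i j * M i j) + t * (\<Sum>i\<in>N. \<Sum>j\<in>N. w i j * D' i j)"
        by (simp add: M'_def sum.distrib sum_distrib_left algebra_simps)
      moreover have "t * (\<Sum>i\<in>N. \<Sum>j\<in>N. w i j * D' i j) \<ge> 0" using tpos gD' by simp
      ultimately show ?thesis by linarith
    qed
    obtain B where B: "\<forall>i\<in>N. \<forall>j\<in>N. B i j \<in> {0,1}" "\<forall>i\<in>N. (\<Sum>j\<in>N. B i j) = (\<Sum>j\<in>N. M' i j)"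
      "\<forall>j\<in>N. (\<Sum>i\<in>N. B i j) = (\<Sum>i\<in>N. M' i j)"
      "(\<Sum>i\<in>N. \<Sum>j\<in>N. w i j * B i j) \<ge> (\<Sum>i\<in>N. \<Sum>j\<in>N. w i j * M' i j)"
      using less.IH[OF lessk refl bnd'] rint cint rs cs by auto
    show ?thesis using B rs cs obj by (intro exI[of _ B]) auto
  qed
qed



lemma cs_bound:
  fixes a :: "nat \<Rightarrow> nat \<Rightarrow> real" and n :: nat
  assumes "n \<ge> 1"
  shows "(\<Sum>i\<in>{1..n}. \<Sum>j\<in>{1..n}. a i j)^2 / (real n)^2 \<le> (\<Sum>i\<in>{1..n}. \<Sum>j\<in>{1..n}. a i j * a i j)"
proof -
  define N where "N = {1..n}"
  define X where "X = (\<Sum>i\<in>N. \<Sum>j\<in>N. a i j)"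
  define Q where "Q = (\<Sum>i\<in>N. \<Sum>j\<in>N. a i j * a i j)"
  define m where "m = X / (real n)^2"
  have cN: "card N = n" by (simp add: N_def)
  have "0 \<le> (\<Sum>i\<in>N. \<Sum>j\<in>N. (a i j - m)^2)" by (intro sum_nonneg) auto
  also have "(\<Sum>i\<in>N. \<Sum>j\<in>N. (a i j - m)^2) = (\<Sum>i\<in>N. \<Sum>j\<in>N. (a i j * a i j - 2 * m * a i j + m * m))"
    by (simp add: power2_eq_square algebra_simps)
  also have "\<dots> = Q - 2 * m * X + real n * real n * m * m"
    by (simp add: Q_def X_def sum.distrib sum_subtractf sum_distrib_left cN)
  finally have "0 \<le> Q - 2 * m * X + real n * real n * m * m" .
  moreover have "real n * real n * m * m = X^2 / (real n)^2" "2 * m * X = 2 * (X^2 / (real n)^2)"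
    using assms by (simp_all add: m_def power2_eq_square field_simps)
  ultimately show ?thesis unfolding X_def Q_def N_def by linarith
qed


theorem lemma4p1:
  fixes n :: nat and a :: "nat \<Rightarrow> nat \<Rightarrow> real"
  assumes "n \<ge> 1"
    and "\<And>i j. i \<in> {1..n} \<Longrightarrow> j \<in> {1..n} \<Longrightarrow> 0 \<le> a i j \<and> a i j \<le> 1"
    and "\<And>i. i \<in> {1..n} \<Longrightarrow> \<exists>k::nat. (\<Sum>j\<in>{1..n}. a i j) = real k"
    and "\<And>j. j \<in> {1..n} \<Longrightarrow> \<exists>k::nat. (\<Sum>i\<in>{1..n}. a i j) = real k"
  shows "\<exists>b :: nat \<Rightarrow> nat \<Rightarrow> real.
           (\<forall>i\<in>{1..n}. \<forall>j\<in>{1..n}. b i j \<in> {0, 1})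
         \<and> (\<forall>i\<in>{1..n}. (\<Sum>j\<in>{1..n}. b i j) = (\<Sum>j\<in>{1..n}. a i j))
         \<and> (\<forall>j\<in>{1..n}. (\<Sum>i\<in>{1..n}. b i j) = (\<Sum>i\<in>{1..n}. a i j))
         \<and> (\<Sum>i\<in>{1..n}. \<Sum>j\<in>{1..n}. a i j * b i j)
             \<ge> (\<Sum>i\<in>{1..n}. \<Sum>j\<in>{1..n}. a i j)^2 / (real n)^2"
proof -
  have ri: "\<forall>i\<in>{1..n}. (\<Sum>j\<in>{1..n}. a i j) \<in> \<int>"
    using assms(3) by (metis Ints_of_nat)
  have ci: "\<forall>j\<in>{1..n}. (\<Sum>i\<in>{1..n}. a i j) \<in> \<int>"
    using assms(4) by (metis Ints_of_nat)
  have bnd: "\<forall>i\<in>{1..n}. \<forall>j\<in>{1..n}. 0 \<le> a i j \<and> a i j \<le> 1" using assms(2) by blast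
  obtain b where b: "\<forall>i\<in>{1..n}. \<forall>j\<in>{1..n}. b i j \<in> {0,1}"
      "\<forall>i\<in>{1..n}. (\<Sum>j\<in>{1..n}. b i j) = (\<Sum>j\<in>{1..n}. a i j)"
      "\<forall>j\<in>{1..n}. (\<Sum>i\<in>{1..n}. b i j) = (\<Sum>i\<in>{1..n}. a i j)"
      "(\<Sum>i\<in>{1..n}. \<Sum>j\<in>{1..n}. a i j * b i j) \<ge> (\<Sum>i\<in>{1..n}. \<Sum>j\<in>{1..n}. a i j * a i j)"
    using round_aux[where N="{1..n}" and w=a and M=a, OF finite_atLeastAtMost refl bnd ri ci] by auto
  moreover have "(\<Sum>i\<in>{1..n}. \<Sum>j\<in>{1..n}. a i j)^2 / (real n)^2 \<le> (\<Sum>i\<in>{1..n}. \<Sum>j\<in>{1..n}. a i j * a i j)"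
    by (rule cs_bound[OF assms(1)])
  ultimately show ?thesis by (intro exI[of _ b]) auto
qed

end
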